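(* Let $n$ be sufficiently large, $\alpha\in[1,n^{0.2}]$, $B=\gamma=\alpha(\ln n)^{10}$, $\rho=(\ln n)^3$, let $L\ge 2$ be an integer and $j\in\{1,\dots,L-1\}$. Let $\zeta_1=\left(\tfrac12-B^{-(j+1)}\right)\gamma B^{2j}-\sqrt{10\gamma\ln n}\,B^{j}$ and $\zeta_3=\tfrac{\gamma B^{2j}}{2}+\tfrac{B^{j+1}}{100}$. Consider a Bernoulli arm with mean $\tfrac12-X$, where $X\sim\mu$ for some $\mu\in\mathcal{D}_j$. Pull the arm $\gamma B^{2j}$ times, obtaining outcomes $\Theta\in\{0,1\}^{\gamma B^{2j}}$ with $|\Theta|=\sum_i\Theta_i$. Then for every outcome vector $\theta$ with $|\theta|\in[\zeta_1,\zeta_3]$, the posterior distribution $\nu$ of $X$ conditioned on $\Theta=\theta$ belongs to $\mathcal{D}_{j+1}$.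
   Context: For an integer $j\ge1$ and $\eta\ge0$, $\mathcal{D}_j(\eta)$ is the class of probability distributions $\pi$ supported on $\{B^{-1},B^{-2},\dots,B^{-L}\}$ such that, for $X\sim\pi$: (i) if $j\ge2$, $\Pr[X\in\{B^{-1},\dots,B^{-(j-1)}\}]\le n^{-9}$; (ii) there is a normalization constant $\lambda>0$ (depending on $\pi$) such that for every $\ell=j,\dots,L$, $\Pr[X=B^{-\ell}]\in\left[\lambda B^{-2\ell}(1-\rho^{-\ell}\eta),\ \lambda B^{-2\ell}(1+\rho^{-\ell}\eta)\right]$. The class $\mathcal{D}_1:=\mathcal{D}_1(0)$ consists of the single distribution with $\Pr[X=B^{-\ell}]=\lambda_1B^{-2\ell}$ for $\ell=1,\dots,L$ ($\lambda_1$ the normalizer), and for $j\ge2$, $\mathcal{D}_j:=\mathcal{D}_j(\rho^j/2)$. *)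

theory Defs
  imports "HOL-Probability.Probability"
begin

definition levels :: "real \<Rightarrow> nat \<Rightarrow> real set" where
  "levels B L = {inverse (B ^ l) | l. l \<in> {1..L}}"

definition Dclass :: "nat \<Rightarrow> real \<Rightarrow> real \<Rightarrow> nat \<Rightarrow> nat \<Rightarrow> real \<Rightarrow> real pmf \<Rightarrow> bool" where
  "Dclass n B \<rho> L j \<eta> \<pi> \<longleftrightarrow>
     set_pmf \<pi> \<subseteq> levels B L \<and>
     (j \<ge> 2 \<longrightarrow> measure_pmf.prob \<pi> {inverse (B ^ l) | l. l \<in> {1..j-1}} \<le> inverse (real n ^ 9)) \<and>
     (\<exists>c>0. \<forall>l\<in>{j..L}.
        c * inverse (B ^ (2*l)) * (1 - inverse (\<rho> ^ l) * \<eta>) \<le> pmf \<pi> (inverse (B ^ l)) \<and>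
        pmf \<pi> (inverse (B ^ l)) \<le> c * inverse (B ^ (2*l)) * (1 + inverse (\<rho> ^ l) * \<eta>))"

definition Dcls :: "nat \<Rightarrow> real \<Rightarrow> real \<Rightarrow> nat \<Rightarrow> nat \<Rightarrow> real pmf \<Rightarrow> bool" where
  "Dcls n B \<rho> L j = Dclass n B \<rho> L j (if j = 1 then 0 else \<rho> ^ j / 2)"

text \<open>Joint law of (X, Theta): X ~ mu, then m independent pulls of a Bernoulli(1/2 - X) arm.
  Outcome vectors are functions nat => bool, False outside {..<m}.\<close>
definition joint :: "real pmf \<Rightarrow> nat \<Rightarrow> (real \<times> (nat \<Rightarrow> bool)) pmf" where
  "joint \<mu> m = bind_pmf \<mu> (\<lambda>x. map_pmf (\<lambda>t. (x, t))
        (Pi_pmf {..<m} False (\<lambda>_. bernoulli_pmf (1/2 - x))))"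

definition posterior :: "real pmf \<Rightarrow> nat \<Rightarrow> (nat \<Rightarrow> bool) \<Rightarrow> real pmf" where
  "posterior \<mu> m \<theta> = map_pmf fst (cond_pmf (joint \<mu> m) {p. snd p = \<theta>})"

definition numPulls :: "real \<Rightarrow> real \<Rightarrow> nat \<Rightarrow> nat" where
  "numPulls \<gamma> B j = nat \<lfloor>\<gamma> * B ^ (2*j)\<rfloor>"

definition zeta1 :: "nat \<Rightarrow> real \<Rightarrow> real \<Rightarrow> nat \<Rightarrow> real" where
  "zeta1 n \<gamma> B j = (1/2 - inverse (B ^ (j+1))) * \<gamma> * B ^ (2*j) - sqrt (10 * \<gamma> * ln (real n)) * B ^ j"

definition zeta3 :: "real \<Rightarrow> real \<Rightarrow> nat \<Rightarrow> real" where
  "zeta3 \<gamma> B j = \<gamma> * B ^ (2*j) / 2 + B ^ (j+1) / 100"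

end

theory Submission
  imports Defs
begin


lemma joint_pmf:
  "pmf (joint \<mu> m) (x, \<theta>) = pmf \<mu> x * pmf (Pi_pmf {..<m} False (\<lambda>_. bernoulli_pmf (1/2 - x))) \<theta>"
proof -
  have "pmf (joint \<mu> m) (x, \<theta>) = (\<integral>x'. pmf (map_pmf (\<lambda>t. (x', t))
        (Pi_pmf {..<m} False (\<lambda>_. bernoulli_pmf (1/2 - x')))) (x,\<theta>) \<partial>measure_pmf \<mu>)"
    unfolding joint_def pmf_bind ..
  also have "\<dots> = (\<integral>x'. indicator {x} x' * pmf (Pi_pmf {..<m} False (\<lambda>_. bernoulli_pmf (1/2 - x))) \<theta> \<partial>measure_pmf \<mu>)"
  proof (rule Bochner_Integration.integral_cong[OF refl])
    fix x' show "pmf (map_pmf (\<lambda>t. (x', t))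
        (Pi_pmf {..<m} False (\<lambda>_. bernoulli_pmf (1/2 - x')))) (x,\<theta>) = indicator {x} x' * pmf (Pi_pmf {..<m} False (\<lambda>_. bernoulli_pmf (1/2 - x))) \<theta>"
    proof (cases "x' = x")
      case True
      have "inj (\<lambda>t. (x, t))" by (auto simp: inj_def)
      then show ?thesis using True by (simp add: pmf_map_inj'[OF \<open>inj (\<lambda>t. (x, t))\<close>])
    next
      case False
      then have "Pair x' -` {(x, \<theta>)} = {}" by auto
      then show ?thesis using False by (simp add: pmf_map)
    qed
  qed
  also have "\<dots> = pmf \<mu> x * pmf (Pi_pmf {..<m} False (\<lambda>_. bernoulli_pmf (1/2 - x))) \<theta>"
    by (simp add: measure_pmf_single)
  finally show ?thesis .
qed

lemma Pi_bern:
  assumes "0 \<le> x" "x \<le> 1/2" "\<forall>i\<ge>m. \<not> \<theta> i"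
  shows "pmf (Pi_pmf {..<m} False (\<lambda>_. bernoulli_pmf (1/2 - x))) \<theta>
     = (1/2 - x) ^ card {i. i < m \<and> \<theta> i} * (1/2 + x) ^ (m - card {i. i < m \<and> \<theta> i})"
proof -
  have "pmf (Pi_pmf {..<m} False (\<lambda>_. bernoulli_pmf (1/2 - x))) \<theta> =
     (\<Prod>i\<in>{..<m}. if \<theta> i then 1/2 - x else 1/2 + x)"
    using assms by (subst pmf_Pi) (auto intro!: prod.cong)
  also have "\<dots> = (\<Prod>i\<in>{..<m} \<inter> {i. \<theta> i}. 1/2 - x) * (\<Prod>i\<in>{..<m} \<inter> - {i. \<theta> i}. 1/2 + x)"
    by (rule prod.If_cases) auto
  also have "{..<m} \<inter> {i. \<theta> i} = {i. i < m \<and> \<theta> i}" by auto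
  finally have eq: "pmf (Pi_pmf {..<m} False (\<lambda>_. bernoulli_pmf (1/2 - x))) \<theta> = (\<Prod>i\<in>{i. i < m \<and> \<theta> i}. 1/2 - x) * (\<Prod>i\<in>{..<m} \<inter> - {i. \<theta> i}. 1/2 + x)" .
  have "card ({..<m} \<inter> - {i. \<theta> i}) = m - card {i. i < m \<and> \<theta> i}"
  proof -
    have "{..<m} \<inter> - {i. \<theta> i} = {..<m} - {i. i < m \<and> \<theta> i}" by auto
    then show ?thesis by (simp only:) (subst card_Diff_subset, auto)
  qed
  then show ?thesis using eq by simp
qed

lemma posterior_pmf:
  assumes supp: "\<forall>x\<in>set_pmf \<mu>. 0 < x \<and> x < 1/2" and th: "\<forall>i\<ge>m. \<not> \<theta> i"
  shows "measure_pmf.prob (joint \<mu> m) {p. snd p = \<theta>} > 0 \<and>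
    (\<forall>x. pmf (posterior \<mu> m \<theta>) x = pmf \<mu> x * pmf (Pi_pmf {..<m} False (\<lambda>_. bernoulli_pmf (1/2 - x))) \<theta>
       / measure_pmf.prob (joint \<mu> m) {p. snd p = \<theta>})"
proof -
  define S where "S = {p :: real \<times> (nat \<Rightarrow> bool). snd p = \<theta>}"
  define J where "J = joint \<mu> m"
  obtain x0 where x0: "x0 \<in> set_pmf \<mu>" using set_pmf_not_empty[of \<mu>] by blast
  have "pmf J (x0, \<theta>) > 0"
    unfolding J_def joint_pmf using supp x0 th
    by (subst Pi_bern) (auto simp: pmf_positive)
  then have inJ: "(x0, \<theta>) \<in> set_pmf J" by (simp add: set_pmf_iff)
  then have ne: "set_pmf J \<inter> S \<noteq> {}" by (auto simp: S_def)
  have Zpos: "measure_pmf.prob J S > 0"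
    using inJ by (intro measure_pmf_posI[of "(x0,\<theta>)"]) (auto simp: S_def)
  have "pmf (posterior \<mu> m \<theta>) x = pmf \<mu> x * pmf (Pi_pmf {..<m} False (\<lambda>_. bernoulli_pmf (1/2 - x))) \<theta>
       / measure_pmf.prob J S" for x
  proof -
    let ?C = "cond_pmf J S"
    have "pmf (posterior \<mu> m \<theta>) x = measure_pmf.prob ?C (fst -` {x})"
      unfolding posterior_def J_def S_def pmf_map ..
    also have "\<dots> = measure_pmf.prob ?C (fst -` {x} \<inter> set_pmf ?C)"
      by (simp add: measure_Int_set_pmf)
    also have "fst -` {x} \<inter> set_pmf ?C = {(x,\<theta>)} \<inter> set_pmf ?C"
      using ne by (auto simp: S_def)
    also have "measure_pmf.prob ?C \<dots> = pmf ?C (x, \<theta>)"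
      by (simp add: measure_Int_set_pmf measure_pmf_single)
    also have "\<dots> = pmf J (x,\<theta>) / measure_pmf.prob J S"
      using ne by (simp add: pmf_cond S_def)
    finally show ?thesis unfolding J_def joint_pmf .
  qed
  then show ?thesis using Zpos unfolding J_def S_def by blast
qed



lemma pow_le_exp:
  fixes y :: real assumes "0 \<le> 1 + y"
  shows "(1 + y) ^ n \<le> exp (y * real n)"
proof -
  have "(1 + y) ^ n \<le> exp y ^ n"
    by (rule power_mono) (use assms in auto)
  also have "\<dots> = exp (y * real n)" by (simp add: exp_of_nat_mult[symmetric] mult.commute)
  finally show ?thesis .
qed

lemma pow_ge_plus:
  fixes y :: real assumes "0 \<le> y" "y \<le> 1"
  shows "exp ((y - y^2) * real n) \<le> (1 + y) ^ n"
proof -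
  have "exp (y - y^2) \<le> 1 + y"
    using ln_one_plus_pos_lower_bound[OF assms] assms
    by (metis add_nonneg_pos exp_le_cancel_iff exp_ln zero_less_one add.commute)
  then have "exp (y - y^2) ^ n \<le> (1 + y) ^ n"
    by (rule power_mono) simp
  then show ?thesis by (simp add: exp_of_nat_mult[symmetric] mult.commute)
qed

lemma pow_ge_minus:
  fixes y :: real assumes "0 \<le> y" "y \<le> 1/2"
  shows "exp ((- y - 2 * y^2) * real n) \<le> (1 - y) ^ n"
proof -
  have "exp (- y - 2 * y^2) \<le> 1 - y"
  proof -
    have p: "0 < 1 - y" using assms by simp
    have "exp (- y - 2 * y^2) \<le> exp (ln (1 - y))"
      using ln_one_minus_pos_lower_bound[OF assms] by simp
    then show ?thesis using p by simp
  qed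
  then have "exp (- y - 2 * y^2) ^ n \<le> (1 - y) ^ n"
    by (rule power_mono) simp
  then show ?thesis by (simp add: exp_of_nat_mult[symmetric] mult.commute)
qed

lemma h_upper:
  fixes x :: real assumes "0 \<le> x" "x \<le> 1/2" "k \<le> m"
  shows "(1 - 2*x) ^ k * (1 + 2*x) ^ (m - k) \<le> exp (2 * x * (real m - 2 * real k))"
proof -
  have "(1 - 2*x) ^ k \<le> exp ((- 2 * x) * real k)"
    using pow_le_exp[of "-2*x" k] assms by simp
  moreover have "(1 + 2*x) ^ (m - k) \<le> exp ((2 * x) * real (m - k))"
    using pow_le_exp[of "2*x" "m-k"] assms by simp
  ultimately have "(1 - 2*x) ^ k * (1 + 2*x) ^ (m - k) \<le> exp ((- 2 * x) * real k) * exp ((2 * x) * real (m - k))"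
    using assms by (intro mult_mono) auto
  also have "\<dots> = exp (2 * x * (real m - 2 * real k))"
    using assms by (simp add: exp_add[symmetric] of_nat_diff algebra_simps)
  finally show ?thesis .
qed

lemma h_lower:
  fixes x :: real assumes "0 \<le> x" "x \<le> 1/4" "k \<le> m"
  shows "exp (2 * x * (real m - 2 * real k) - 8 * x^2 * real m) \<le> (1 - 2*x) ^ k * (1 + 2*x) ^ (m - k)"
proof -
  have a: "exp ((- (2*x) - 2 * (2*x)^2) * real k) \<le> (1 - 2*x) ^ k"
    using pow_ge_minus[of "2*x" k] assms by simp
  have b: "exp ((2*x - (2*x)^2) * real (m - k)) \<le> (1 + 2*x) ^ (m - k)"
    using pow_ge_plus[of "2*x" "m-k"] assms by simp
  have "exp (2 * x * (real m - 2 * real k) - 8 * x^2 * real m)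
     \<le> exp ((- (2*x) - 2 * (2*x)^2) * real k) * exp ((2*x - (2*x)^2) * real (m - k))"
  proof -
    have "2 * x * (real m - 2 * real k) - 8 * x^2 * real m \<le> (- (2*x) - 2 * (2*x)^2) * real k + (2*x - (2*x)^2) * real (m - k)"
    proof -
      have "x^2 * real k \<le> x^2 * real m" using assms by (intro mult_left_mono) auto
      moreover have "x^2 * real (m-k) \<le> x^2 * real m" using assms by (intro mult_left_mono) auto
      ultimately show ?thesis using assms by (simp add: of_nat_diff power2_eq_square algebra_simps)
    qed
    then show ?thesis by (simp add: exp_add[symmetric])
  qed
  also have "\<dots> \<le> (1 - 2*x) ^ k * (1 + 2*x) ^ (m - k)"
    using a b assms by (intro mult_mono) auto
  finally show ?thesis .
qed

lemma D_bounds: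
  fixes B P sv :: real
  assumes B: "B \<ge> 1000" and P: "P \<ge> B" and sv: "0 \<le> sv" "sv \<le> B/100"
    and m1: "real m \<le> B*P^2" and m2: "B*P^2 - 1 \<le> real m"
    and k1: "(1/2 - 1/(B*P))*B*P^2 - sv*P \<le> real k" and k2: "real k \<le> B*P^2/2 + B*P/100"
  shows "real m - 2 * real k \<le> 2*P + 2* sv*P" "real m - 2 * real k \<ge> -1 - B*P/50"
proof -
  have "(1/2 - 1/(B*P))*B*P^2 = B*P^2/2 - P" using B P by (simp add: field_simps power2_eq_square)
  then show "real m - 2 * real k \<le> 2*P + 2* sv*P" using m1 k1 by linarith
  show "real m - 2 * real k \<ge> -1 - B*P/50" using m2 k2 by linarith
qed

lemma h_near:
  fixes B P sv u x :: real
  assumes B: "B \<ge> 1000" and P: "P \<ge> B" and sv: "0 \<le> sv" "sv \<le> B/100"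
    and m1: "real m \<le> B*P^2" and m2: "B*P^2 - 1 \<le> real m" and km: "k \<le> m"
    and k1: "(1/2 - 1/(B*P))*B*P^2 - sv*P \<le> real k" and k2: "real k \<le> B*P^2/2 + B*P/100"
    and u: "u \<ge> 1" and x: "x = 1/(P*B*u)"
  shows "exp (- (1/(16*u))) \<le> (1 - 2*x) ^ k * (1 + 2*x) ^ (m - k)"
        "(1 - 2*x) ^ k * (1 + 2*x) ^ (m - k) \<le> exp (1/(16*u))"
proof -
  note D = D_bounds[OF B P sv m1 m2 k1 k2]
  have Bp: "B > 0" "P > 0" "u > 0" using B P u by auto
  have x0: "0 \<le> x" using x Bp by simp
  have "P*B*u \<ge> 4*1*1" using B P u
    by (intro mult_mono) auto
  then have x1: "x \<le> 1/4" using x by (simp add: field_simps)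
  have up: "2 * x * (real m - 2 * real k) \<le> 1/(16*u)"
  proof -
    have "2 * x * (real m - 2 * real k) \<le> 2 * x * (2*P + 2* sv*P)"
      using D(1) x0 by (intro mult_left_mono) auto
    also have "\<dots> = (4*(1+sv)/B)/u" unfolding x using Bp by (simp add: field_simps)
    also have "\<dots> \<le> (1/16)/u"
      using Bp sv B by (intro divide_right_mono) (auto simp: field_simps)
    finally show ?thesis by simp
  qed
  show "(1 - 2*x) ^ k * (1 + 2*x) ^ (m - k) \<le> exp (1/(16*u))"
  proof -
    have "(1 - 2*x) ^ k * (1 + 2*x) ^ (m - k) \<le> exp (2 * x * (real m - 2 * real k))"
      using h_upper[of x k m] x0 x1 km by simp
    also have "\<dots> \<le> exp (1/(16*u))" using up by simp
    finally show ?thesis .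
  qed
  have lo: "2 * x * (real m - 2 * real k) - 8 * x^2 * real m \<ge> - (1/(16*u))"
  proof -
    have "2 * x * (real m - 2 * real k) \<ge> 2 * x * (-1 - B*P/50)"
      using D(2) x0 by (intro mult_left_mono) auto
    also have "2 * x * (-1 - B*P/50) = - ((2/(P*B) + 1/25)/u)" unfolding x using Bp by (simp add: field_simps)
    finally have a: "2 * x * (real m - 2 * real k) \<ge> - ((2/(P*B) + 1/25)/u)" .
    have "8 * x^2 * real m \<le> 8 * x^2 * (B*P^2)"
      using m1 by (intro mult_left_mono) auto
    also have "\<dots> = (8/B)/u/u" unfolding x using Bp by (simp add: field_simps power2_eq_square)
    also have "\<dots> \<le> (8/B)/u"
      using Bp u by (simp add: field_simps)
    finally have b: "8 * x^2 * real m \<le> (8/B)/u" .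
    have c: "(2/(P*B) + 1/25) + 8/B \<le> 1/16"
    proof -
      have "2/(P*B) \<le> 2/B" using Bp P B by (simp add: field_simps)
      moreover have "10/B \<le> 1/100" using Bp B by (simp add: field_simps)
      ultimately show ?thesis by simp
    qed
    have "(2/(P*B) + 1/25)/u + (8/B)/u \<le> (1/16)/u"
    proof -
      have "(2/(P*B) + 1/25)/u + (8/B)/u = ((2/(P*B) + 1/25) + 8/B)/u"
        by (simp add: add_divide_distrib)
      also have "\<dots> \<le> (1/16)/u" using c Bp by (intro divide_right_mono) auto
      finally show ?thesis .
    qed
    from this a b show ?thesis by linarith
  qed
  show "exp (- (1/(16*u))) \<le> (1 - 2*x) ^ k * (1 + 2*x) ^ (m - k)"
  proof -
    have "exp (- (1/(16*u))) \<le> exp (2 * x * (real m - 2 * real k) - 8 * x^2 * real m)"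
      using lo by simp
    also have "\<dots> \<le> (1 - 2*x) ^ k * (1 + 2*x) ^ (m - k)"
      using h_lower[of x k m] x0 x1 km by simp
    finally show ?thesis .
  qed
qed

lemma h_small:
  fixes B P sv x :: real
  assumes B: "B \<ge> 1000" and P: "P \<ge> B" and sv: "0 \<le> sv" "sv \<le> B/100"
    and m1: "real m \<le> B*P^2" and m2: "B*P^2 - 1 \<le> real m" and km: "k \<le> m"
    and k1: "(1/2 - 1/(B*P))*B*P^2 - sv*P \<le> real k" and k2: "real k \<le> B*P^2/2 + B*P/100"
    and x1: "1/P \<le> x" and x2: "x \<le> 1/B"
  shows "(1 - 2*x) ^ k * (1 + 2*x) ^ (m - k) \<le> exp (- B)"
proof -
  note D = D_bounds[OF B P sv m1 m2 k1 k2]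
  have Bp: "B > 0" "P > 0" using B P by auto
  have x0: "0 < x" using x1 Bp by (smt (verit) divide_pos_pos)
  have "1/B \<le> 1/4" using B by simp
  then have x4: "x \<le> 1/4" using x2 by linarith
  have xP: "x * P \<ge> 1" using x1 Bp by (simp add: field_simps)
  have sq: "(1 - 2*x) * (1 + 2*x) = 1 + (- 4*x^2)" by (simp add: algebra_simps power2_eq_square)
  have sq0: "0 \<le> 1 + (- 4*x^2)" using x0 x4
  proof -
    have "x^2 \<le> (1/4)^2" using x0 x4 by (intro power_mono) auto
    then show ?thesis by (simp add: power_divide)
  qed
  show ?thesis
  proof (cases "2*k \<le> m")
    case True
    have "(1 - 2*x) ^ k * (1 + 2*x) ^ (m - k) = ((1 - 2*x) * (1 + 2*x)) ^ k * (1 + 2*x) ^ (m - 2*k)"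
    proof -
      have "m - k = k + (m - 2*k)" using True by simp
      then have "(1+2*x)^(m-k) = (1+2*x)^k * (1+2*x)^(m-2*k)" by (metis power_add)
      then show ?thesis by (simp add: power_mult_distrib)
    qed
    also have "\<dots> \<le> exp ((- 4*x^2) * real k) * exp ((2*x) * real (m - 2*k))"
      unfolding sq using sq0 x0 by (intro mult_mono pow_le_exp) auto
    also have "\<dots> = exp (2*x * ((real m - 2*real k) - 2*x*real k))"
    proof -
      have "real (m - 2*k) = real m - 2 * real k" using True by (simp add: of_nat_diff)
      then have "(- 4*x^2) * real k + (2*x) * real (m - 2*k) = 2*x * ((real m - 2*real k) - 2*x*real k)"
        by (simp add: algebra_simps power2_eq_square)
      then show ?thesis by (simp only: exp_add[symmetric])
    qed
    also have "\<dots> \<le> exp (- B)"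
    proof -
      have "x * real k \<ge> (1/P) * real k" using x1 by (intro mult_right_mono) auto
      moreover have "(1/P) * real k \<ge> (B*P^2 - 2*P - 2* sv*P)/(2*P)"
      proof -
        have "(1/2 - 1/(B*P))*B*P^2 = B*P^2/2 - P" using Bp by (simp add: field_simps power2_eq_square)
        then have "real k \<ge> (B*P^2 - 2*P - 2* sv*P)/2" using k1 by simp
        then have "(1/P) * real k \<ge> (1/P) * ((B*P^2 - 2*P - 2* sv*P)/2)" using Bp
          by (intro mult_left_mono) auto
        then show ?thesis by simp
      qed
      moreover have "(B*P^2 - 2*P - 2* sv*P)/(2*P) = (B*P - 2 - 2* sv)/2"
        using Bp by (simp add: field_simps power2_eq_square)
      ultimately have e1: "(B*P - 2 - 2* sv)/2 \<le> x*real k" by (metis order_trans)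
      have xk: "2*x*real k \<ge> B*P - 2 - 2* sv" using e1 by (simp add: field_simps)
      have sP: "sv*P \<le> (B/100)*P" using sv Bp by (intro mult_right_mono) auto
      have BP: "B*P \<ge> B*1" using Bp P B by (intro mult_left_mono) auto
      have P1: "P \<ge> 1" using P B by simp
      have "9 * P \<le> B * P" using B Bp by (intro mult_right_mono) auto
      then have inner: "(real m - 2*real k) - 2*x*real k \<le> - (B*P/2)"
        using D(1) xk sP BP P1 sv by linarith
      have "2*x * ((real m - 2*real k) - 2*x*real k) \<le> 2*x * (- (B*P/2))"
        using inner x0 by (intro mult_left_mono) auto
      also have "\<dots> = - B * (x*P)" by (simp add: algebra_simps)
      also have "\<dots> \<le> - B * 1" using xP Bp by (intro mult_left_mono_neg) auto
      finally show ?thesis by simp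
    qed
    finally show ?thesis .
  next
    case False
    have "(1 - 2*x) ^ k * (1 + 2*x) ^ (m - k) = (1 - 2*x) ^ (2*k - m) * ((1 - 2*x) * (1 + 2*x)) ^ (m - k)"
    proof -
      have "k = (2*k - m) + (m - k)" using False km by simp
      then have "(1 - 2*x) ^ k = (1 - 2*x) ^ (2*k - m) * (1 - 2*x) ^ (m - k)"
        by (metis power_add)
      then show ?thesis by (simp add: power_mult_distrib)
    qed
    also have "\<dots> \<le> 1 * exp ((- 4*x^2) * real (m - k))"
    proof (rule mult_mono)
      show "(1 - 2*x) ^ (2*k - m) \<le> 1" using x0 x4 by (intro power_le_one) auto
      show "((1 - 2*x) * (1 + 2*x)) ^ (m - k) \<le> exp ((- 4*x^2) * real (m - k))"
        unfolding sq using sq0 by (rule pow_le_exp)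
    qed (use sq0 in \<open>simp_all add: sq\<close>)
    also have "\<dots> \<le> exp (- B)"
    proof -
      have "B*P^2 \<ge> B*P*B" using Bp P by (simp add: power2_eq_square mult_left_mono)
      moreover have "B*P*B \<ge> B*P*1000" using Bp B by (intro mult_left_mono) auto
      moreover have "B*P \<ge> 1*1" using Bp B P by (intro mult_mono) auto
      moreover have "real (m - k) = real m - real k" using km by (simp add: of_nat_diff)
      ultimately have "real (m - k) \<ge> B*P^2/4" using m2 k2 by linarith
      then have a: "4*x^2 * real (m - k) \<ge> 4*x^2 * (B*P^2/4)"
        by (intro mult_left_mono) auto
      have b: "4*x^2 * (B*P^2/4) = B * (x*P)^2" by (simp add: power_mult_distrib)
      have c: "B * (x*P)^2 \<ge> B * 1" using xP Bp by (intro mult_left_mono) (auto simp: one_le_power)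
      have "(- 4*x^2) * real (m - k) \<le> - B" using a b c by linarith
      then show ?thesis by simp
    qed
    finally show ?thesis .
  qed
qed



lemma combine:
  fixes Q c b p h r \<delta> E a :: real
  assumes Q: "Q > 0" and c: "c > 0" and b: "b > 0" and d: "0 \<le> \<delta>" "\<delta> \<le> E/2" and E: "E \<le> 1/2"
    and a: "0 \<le> a" "a \<le> E/8" and p: "c*b*(1-\<delta>) \<le> p" "p \<le> c*b*(1+\<delta>)"
    and h: "exp (-a) \<le> h" "h \<le> exp a" and r: "r = Q*(p*h)"
  shows "(Q*c)*b*(1-E) \<le> r \<and> r \<le> (Q*c)*b*(1+E)"
proof
  have cb: "c*b > 0" using c b by simp
  have h1: "h \<le> 1 + 2*a"
  proof -
    have "norm (exp a) \<le> 1 + 2 * norm a" using a E by (intro exp_bound_lemma) auto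
    then show ?thesis using h a by simp
  qed
  have h0: "1 - a \<le> h" using exp_ge_add_one_self[of "-a"] h by simp
  have hp: "0 \<le> h" using h(1) by (smt (verit) exp_gt_zero)
  have pp: "0 \<le> c*b*(1-\<delta>)" using cb d E by simp
  have "p*h \<le> (c*b*(1+\<delta>))*(1+2*a)"
    using p pp hp h1 by (intro mult_mono) auto
  also have "\<dots> = c*b*((1+\<delta>)*(1+2*a))" by simp
  also have "\<dots> \<le> c*b*(1+E)"
  proof (rule mult_left_mono)
    have "a*\<delta> \<le> (E/8)*(1/4)" using a d E by (intro mult_mono) auto
    then show "(1+\<delta>)*(1+2*a) \<le> 1+E" using d a E by (simp add: algebra_simps)
  qed (use cb in auto)
  finally have u: "p*h \<le> c*b*(1+E)" .
  have "c*b*(1-E) \<le> c*b*((1-\<delta>)*(1-a))"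
  proof (rule mult_left_mono)
    have "0 \<le> \<delta>*a" using a d by simp
    moreover have "(1-\<delta>)*(1-a) = 1 - \<delta> - a + \<delta>*a" by (simp add: algebra_simps)
    ultimately show "1-E \<le> (1-\<delta>)*(1-a)" using d a E by linarith
  qed (use cb in auto)
  also have "\<dots> = (c*b*(1-\<delta>))*(1-a)" by simp
  also have "\<dots> \<le> p*h" using p pp h0 a E by (intro mult_mono) auto
  finally have l: "c*b*(1-E) \<le> p*h" .
  show "(Q*c)*b*(1-E) \<le> r" using mult_left_mono[OF l, of Q] Q r by (simp add: mult.assoc)
  show "r \<le> (Q*c)*b*(1+E)" using mult_left_mono[OF u, of Q] Q r by (simp add: mult.assoc)
qed

lemma asym:
  fixes B Ln :: real
  assumes "B \<ge> 3456" "B \<ge> 18 * Ln"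
  shows "16 * B^2 * exp (- B) \<le> exp (- 9 * Ln)"
proof -
  have "B/6 \<le> exp (B/6)" using exp_ge_add_one_self[of "B/6"] by linarith
  then have "(B/6)^3 \<le> exp (B/6) ^ 3" using assms by (intro power_mono) auto
  also have "\<dots> = exp (B/2)" by (simp add: exp_of_nat_mult[symmetric])
  finally have e: "(B/6)^3 \<le> exp (B/2)" .
  have "16 * B^2 \<le> (B/6)^3"
  proof -
    have "(16 * 216) * B^2 \<le> B * B^2" using assms by (intro mult_right_mono) auto
    then show ?thesis by (simp add: power_divide power3_eq_cube power2_eq_square)
  qed
  with e have "16 * B^2 \<le> exp (B/2)" by simp
  then have "16 * B^2 * exp (- B) \<le> exp (B/2) * exp (-B)" by (intro mult_right_mono) auto
  also have "\<dots> = exp (- (B/2))" by (simp add: exp_add[symmetric])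
  also have "\<dots> \<le> exp (- 9 * Ln)" using assms by simp
  finally show ?thesis .
qed



lemma levels_eq: "levels B L = (\<lambda>l. inverse (B ^ l)) ` {1..L}"
  unfolding levels_def by auto

lemma core:
  fixes n :: nat and B \<rho> :: real and L j :: nat and \<mu> :: "real pmf" and \<theta> :: "nat \<Rightarrow> bool"
  assumes Ln4: "ln (real n) \<ge> 4"
    and Bge: "B \<ge> ln (real n) ^ 10" and \<rho>def: "\<rho> = ln (real n) ^ 3"
    and L: "2 \<le> L" "1 \<le> j" "j \<le> L - 1" and Dmu: "Dcls n B \<rho> L j \<mu>"
    and th: "\<forall>i\<ge>numPulls B B j. \<not> \<theta> i"
    and z1: "zeta1 n B B j \<le> real (card {i. i < numPulls B B j \<and> \<theta> i})"
    and z3: "real (card {i. i < numPulls B B j \<and> \<theta> i}) \<le> zeta3 B B j"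
  shows "Dcls n B \<rho> L (j+1) (posterior \<mu> (numPulls B B j) \<theta>)"
proof -
  define Ln where "Ln = ln (real n)"
  define m where "m = numPulls B B j"
  define k where "k = card {i. i < m \<and> \<theta> i}"
  define P where "P = B ^ j"
  define sv where "sv = sqrt (10 * B * Ln)"
  define \<nu> where "\<nu> = posterior \<mu> m \<theta>"
  define h where "h = (\<lambda>x::real. (1 - 2*x) ^ k * (1 + 2*x) ^ (m - k))"
  define \<eta> where "\<eta> = (if j = 1 then 0 else \<rho> ^ j / 2)"
  have Ln4': "Ln \<ge> 4" using Ln4 by (simp add: Ln_def)
  have "(4::real)^9 \<le> Ln^9" using Ln4' by (intro power_mono) auto
  then have Ln9: "Ln^9 \<ge> 262144" by simp
  have "Ln^10 = Ln * Ln^9" by (simp add: power_Suc[symmetric])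
  also have "\<dots> \<ge> Ln * 262144" using Ln9 Ln4' by (intro mult_left_mono) auto
  finally have BLn: "B \<ge> 262144 * Ln" using Bge unfolding Ln_def by linarith
  have B0: "B \<ge> 1000000" using BLn Ln4' by linarith
  have Bpos: "B > 0" using B0 by simp
  have \<rho>64: "\<rho> \<ge> 64"
  proof -
    have "(4::real)^3 \<le> Ln^3" using Ln4' by (intro power_mono) auto
    then show ?thesis using \<rho>def Ln_def by simp
  qed
  have \<rho>B: "\<rho> \<le> B"
  proof -
    have "Ln^3 \<le> Ln^10" using Ln4' by (intro power_increasing) auto
    then show ?thesis using \<rho>def Ln_def Bge by simp
  qed
  have s0: "0 \<le> sv" unfolding sv_def using Ln4' Bpos by simp
  have sB: "sv \<le> B/100"
  proof -
    have "10 * B * Ln \<le> B * (B/10000)"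
    proof -
      have "10 * Ln \<le> B/10000" using BLn Ln4' by simp
      then have "B * (10 * Ln) \<le> B * (B/10000)" using Bpos by (intro mult_left_mono) auto
      then show ?thesis by (simp add: algebra_simps)
    qed
    also have "\<dots> = (B/100)^2" by (simp add: power2_eq_square)
    finally have "sqrt (10 * B * Ln) \<le> sqrt ((B/100)^2)" by (rule real_sqrt_le_mono)
    then show ?thesis unfolding sv_def using Bpos by simp
  qed
  have PB: "P \<ge> B" unfolding P_def using power_increasing[of 1 j B] L B0 by simp
  have P2: "B ^ (2*j) = P^2" unfolding P_def by (simp add: power_mult[symmetric] mult.commute)
  have BP1: "B ^ (j+1) = B * P" unfolding P_def by simp
  have mfl: "m = nat \<lfloor>B * P^2\<rfloor>" unfolding m_def numPulls_def P2 ..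
  have BP0: "B * P^2 \<ge> 0" using Bpos by simp
  have m1: "real m \<le> B*P^2" unfolding mfl using BP0 by simp
  have m2: "B*P^2 - 1 \<le> real m" unfolding mfl using BP0 by linarith
  have km: "k \<le> m"
  proof -
    have "k \<le> card {..<m}" unfolding k_def by (rule card_mono) auto
    then show ?thesis by simp
  qed
  have k1: "(1/2 - 1/(B*P))*B*P^2 - sv*P \<le> real k"
  proof -
    have "zeta1 n B B j = (1/2 - 1/(B*P))*B*P^2 - sv*P"
      unfolding zeta1_def P2 BP1 P_def[symmetric] Ln_def[symmetric] sv_def[symmetric]
      by (simp only: inverse_eq_divide)
    then show ?thesis using z1 unfolding k_def m_def by simp
  qed
  have k2: "real k \<le> B*P^2/2 + B*P/100"
  proof -
    have "zeta3 B B j = B*P^2/2 + B*P/100"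
      unfolding zeta3_def P2 BP1 by simp
    then show ?thesis using z3 unfolding k_def m_def by simp
  qed
  have B1000: "B \<ge> 1000" using B0 by simp
  note hyps = B1000 PB s0 sB m1 m2 km k1 k2
  have Dm: "set_pmf \<mu> \<subseteq> levels B L \<and>
     (j \<ge> 2 \<longrightarrow> measure_pmf.prob \<mu> {inverse (B ^ l) | l. l \<in> {1..j-1}} \<le> inverse (real n ^ 9)) \<and>
     (\<exists>c>0. \<forall>l\<in>{j..L}.
        c * inverse (B ^ (2*l)) * (1 - inverse (\<rho> ^ l) * \<eta>) \<le> pmf \<mu> (inverse (B ^ l)) \<and>
        pmf \<mu> (inverse (B ^ l)) \<le> c * inverse (B ^ (2*l)) * (1 + inverse (\<rho> ^ l) * \<eta>))"
    using Dmu unfolding Dcls_def Dclass_def \<eta>_def by simp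
  then obtain c where c0: "c > 0" and cb: "\<forall>l\<in>{j..L}.
        c * inverse (B ^ (2*l)) * (1 - inverse (\<rho> ^ l) * \<eta>) \<le> pmf \<mu> (inverse (B ^ l)) \<and>
        pmf \<mu> (inverse (B ^ l)) \<le> c * inverse (B ^ (2*l)) * (1 + inverse (\<rho> ^ l) * \<eta>)" by blast
  have supp: "set_pmf \<mu> \<subseteq> levels B L" using Dm by blast
  have supp2: "\<forall>x\<in>set_pmf \<mu>. 0 < x \<and> x < 1/2"
  proof
    fix x assume "x \<in> set_pmf \<mu>"
    then obtain l where l: "l \<in> {1..L}" "x = inverse (B ^ l)" using supp levels_eq by blast
    have "B ^ 1 \<le> B ^ l" using l B0 by (intro power_increasing) auto
    then have "inverse (B ^ l) \<le> inverse B" using Bpos by (intro le_imp_inverse_le) auto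
    moreover have "inverse B < 1/2" using B0 by (simp add: inverse_eq_divide)
    ultimately have "inverse (B ^ l) < 1/2" by linarith
    then show "0 < x \<and> x < 1/2" using l Bpos by simp
  qed
  obtain Z where Z0: "Z > 0" and post: "\<forall>x. pmf \<nu> x = pmf \<mu> x *
       pmf (Pi_pmf {..<m} False (\<lambda>_. bernoulli_pmf (1/2 - x))) \<theta> / Z"
    using posterior_pmf[OF supp2 th[folded m_def]] unfolding \<nu>_def by blast
  define Q where "Q = (1/2)^m / Z"
  have Q0: "Q > 0" unfolding Q_def using Z0 by simp
  have pform: "pmf \<nu> x = Q * (pmf \<mu> x * h x)" for x
  proof (cases "x \<in> set_pmf \<mu>")
    case True
    then have x: "0 \<le> x" "x \<le> 1/2" using supp2 by auto
    have "pmf (Pi_pmf {..<m} False (\<lambda>_. bernoulli_pmf (1/2 - x))) \<theta> = (1/2 - x) ^ k * (1/2 + x) ^ (m - k)"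
      unfolding k_def using Pi_bern[OF x th[folded m_def]] .
    also have "\<dots> = ((1/2) * (1 - 2*x)) ^ k * ((1/2) * (1 + 2*x)) ^ (m - k)"
    proof -
      have "1/2 - x = (1/2) * (1 - 2*x)" "1/2 + x = (1/2) * (1 + 2*x)" by simp_all
      then show ?thesis by (simp only:)
    qed
    also have "\<dots> = (1/2) ^ (k + (m - k)) * h x"
      unfolding h_def power_mult_distrib power_add by simp
    also have "k + (m - k) = m" using km by simp
    finally show ?thesis using post unfolding Q_def by simp
  next
    case False
    then have "pmf \<mu> x = 0" by (simp add: set_pmf_iff)
    then show ?thesis using post by simp
  qed
  have hsmall: "h (inverse (B^l)) \<le> exp (- B)" if l: "1 \<le> l" "l \<le> j" for l
  proof -
    have a: "B ^ 1 \<le> B ^ l" "B ^ l \<le> B ^ j" using l B0 by (intro power_increasing; simp)+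
    have "1/P \<le> inverse (B^l)" unfolding P_def using a Bpos
      by (simp add: inverse_eq_divide divide_le_cancel frac_le)
    moreover have "inverse (B^l) \<le> 1/B" using a Bpos
      by (simp add: inverse_eq_divide frac_le)
    ultimately show ?thesis unfolding h_def by (rule h_small[OF hyps])
  qed
  have hnear: "exp (- (1/(16*B^(l-j-1)))) \<le> h (inverse (B^l)) \<and> h (inverse (B^l)) \<le> exp (1/(16*B^(l-j-1)))"
    if l: "j + 1 \<le> l" for l
  proof -
    have u: "B^(l-j-1) \<ge> 1" using B0 by (simp add: one_le_power)
    have "B^l = B^(j + 1 + (l-j-1))" using l by simp
    also have "\<dots> = P*B*B^(l-j-1)" unfolding P_def power_add by simp
    finally have x: "inverse (B^l) = 1/(P*B*B^(l-j-1))" by (simp add: inverse_eq_divide)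
    show ?thesis unfolding h_def using h_near[OF hyps u x] by simp
  qed
  have \<rho>pos: "\<rho> > 0" using \<rho>64 by simp
  have part3: "\<forall>l\<in>{j+1..L}.
        (Q*c) * inverse (B ^ (2*l)) * (1 - inverse (\<rho> ^ l) * (\<rho>^(j+1)/2)) \<le> pmf \<nu> (inverse (B ^ l)) \<and>
        pmf \<nu> (inverse (B ^ l)) \<le> (Q*c) * inverse (B ^ (2*l)) * (1 + inverse (\<rho> ^ l) * (\<rho>^(j+1)/2))"
  proof
    fix l assume l: "l \<in> {j+1..L}"
    define t where "t = l - j - 1"
    have lt: "l = (j + 1) + t" using l unfolding t_def by simp
    have E: "inverse (\<rho> ^ l) * (\<rho>^(j+1)/2) = 1/(2*\<rho>^t)"
      unfolding lt power_add using \<rho>pos by (simp add: field_simps)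
    have \<rho>t: "\<rho>^t \<ge> 1" using \<rho>64 by (simp add: one_le_power)
    have \<delta>: "0 \<le> inverse (\<rho> ^ l) * \<eta> \<and> inverse (\<rho> ^ l) * \<eta> \<le> (1/(2*\<rho>^t))/2"
    proof (cases "j = 1")
      case True then show ?thesis unfolding \<eta>_def using \<rho>t by simp
    next
      case False
      have "inverse (\<rho> ^ l) * \<eta> = 1/(2*\<rho>*\<rho>^t)"
        unfolding \<eta>_def lt power_add using False \<rho>pos by (simp add: field_simps)
      moreover have "1/(2*\<rho>*\<rho>^t) \<le> (1/(2*\<rho>^t))/2"
        using \<rho>64 \<rho>t by (simp add: field_simps)
      ultimately show ?thesis using \<rho>pos by simp
    qed
    have a: "1/(16*B^t) \<le> (1/(2*\<rho>^t))/8"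
    proof -
      have "\<rho>^t \<le> B^t" using \<rho>B \<rho>pos by (intro power_mono) auto
      then show ?thesis using \<rho>t by (simp add: field_simps)
    qed
    have ht: "exp (- (1/(16*B^t))) \<le> h (inverse (B^l)) \<and> h (inverse (B^l)) \<le> exp (1/(16*B^t))"
      using hnear[of l] l unfolding t_def by simp
    have lj: "l \<in> {j..L}" using l by simp
    have "(Q*c)*inverse (B ^ (2*l))*(1-1/(2*\<rho>^t)) \<le> pmf \<nu> (inverse (B ^ l)) \<and>
          pmf \<nu> (inverse (B ^ l)) \<le> (Q*c)*inverse (B ^ (2*l))*(1+1/(2*\<rho>^t))"
    proof (rule combine[OF Q0 c0 _ _ _ _ _ _ _ _ _ _ pform])
      show "inverse (B ^ (2*l)) > 0" using Bpos by simp
      show "1/(2*\<rho>^t) \<le> 1/2" using \<rho>t by (simp add: field_simps)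
    qed (use \<delta> a cb[rule_format, OF lj] ht Bpos in auto)
    then show "(Q*c) * inverse (B ^ (2*l)) * (1 - inverse (\<rho> ^ l) * (\<rho>^(j+1)/2)) \<le> pmf \<nu> (inverse (B ^ l)) \<and>
        pmf \<nu> (inverse (B ^ l)) \<le> (Q*c) * inverse (B ^ (2*l)) * (1 + inverse (\<rho> ^ l) * (\<rho>^(j+1)/2))"
      unfolding E .
  qed
  define lev where "lev A = (\<lambda>l. inverse (B ^ l)) ` A" for A :: "nat set"
  have sumQ: "measure_pmf.prob \<nu> (lev A) = Q * (\<Sum>x\<in>lev A. pmf \<mu> x * h x)" if "finite A" for A
    using that unfolding lev_def
    by (simp add: measure_measure_pmf_finite pform sum_distrib_left)
  have sumM: "measure_pmf.prob \<mu> (lev A) = (\<Sum>x\<in>lev A. pmf \<mu> x)" if "finite A" for A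
    using that unfolding lev_def by (simp add: measure_measure_pmf_finite)
  have Sb: "measure_pmf.prob \<nu> (lev {1..j}) \<le> Q * exp (- B)"
  proof -
    have "(\<Sum>x\<in>lev {1..j}. pmf \<mu> x * h x) \<le> (\<Sum>x\<in>lev {1..j}. pmf \<mu> x * exp (- B))"
    proof (rule sum_mono)
      fix x assume "x \<in> lev {1..j}"
      then obtain l where "l \<in> {1..j}" "x = inverse (B^l)" unfolding lev_def by auto
      then show "pmf \<mu> x * h x \<le> pmf \<mu> x * exp (- B)"
        using hsmall[of l] by (intro mult_left_mono) auto
    qed
    also have "\<dots> = (\<Sum>x\<in>lev {1..j}. pmf \<mu> x) * exp (- B)"
      by (simp add: sum_distrib_right)
    also have "\<dots> = measure_pmf.prob \<mu> (lev {1..j}) * exp (- B)"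
      using sumM[of "{1..j}"] by simp
    also have "\<dots> \<le> 1 * exp (- B)" by (intro mult_right_mono) auto
    finally have "(\<Sum>x\<in>lev {1..j}. pmf \<mu> x * h x) \<le> exp (- B)" by simp
    then show ?thesis using sumQ[of "{1..j}"] Q0 by (simp add: mult_left_mono)
  qed
  define pT where "pT = measure_pmf.prob \<mu> (lev {j+1..L})"
  have QpT: "Q * pT \<le> 2"
  proof -
    have "(\<Sum>x\<in>lev {j+1..L}. pmf \<mu> x * (1/2)) \<le> (\<Sum>x\<in>lev {j+1..L}. pmf \<mu> x * h x)"
    proof (rule sum_mono)
      fix x assume "x \<in> lev {j+1..L}"
      then obtain l where l: "l \<in> {j+1..L}" "x = inverse (B^l)" unfolding lev_def by auto
      have u: "B^(l-j-1) \<ge> 1" using B0 by (simp add: one_le_power)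
      then have "1/(16*B^(l-j-1)) \<le> 1/16" by (simp add: field_simps)
      moreover have "1 - 1/(16*B^(l-j-1)) \<le> exp (- (1/(16*B^(l-j-1))))"
        using exp_ge_add_one_self[of "- (1/(16*B^(l-j-1)))"] by simp
      ultimately have "1/2 \<le> h x" using hnear[of l] l by auto
      then show "pmf \<mu> x * (1/2) \<le> pmf \<mu> x * h x" by (intro mult_left_mono) auto
    qed
    moreover have "(\<Sum>x\<in>lev {j+1..L}. pmf \<mu> x * (1/2)) = pT * (1/2)"
      unfolding pT_def sumM[of "{j+1..L}", OF finite_atLeastAtMost] by (rule sum_distrib_right[symmetric])
    ultimately have "pT * (1/2) \<le> (\<Sum>x\<in>lev {j+1..L}. pmf \<mu> x * h x)" by simp
    then have "Q * (pT * (1/2)) \<le> Q * (\<Sum>x\<in>lev {j+1..L}. pmf \<mu> x * h x)"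
      using Q0 by (intro mult_left_mono) auto
    then have "Q * (pT / 2) \<le> measure_pmf.prob \<nu> (lev {j+1..L})"
      using sumQ[of "{j+1..L}"] by simp
    also have "\<dots> \<le> 1" by simp
    finally show ?thesis by simp
  qed
  have pT8: "8 * B^2 * pT \<ge> 1"
  proof -
    have jL: "j + 1 \<le> L" using L by simp
    have lv: "levels B L = lev {1..j-1} \<union> {inverse (B^j)} \<union> lev {j+1..L}"
    proof -
      have "{1..L} = {1..j-1} \<union> {j} \<union> {j+1..L}" using L by auto
      then show ?thesis unfolding levels_eq lev_def by (simp add: image_Un)
    qed
    have one: "measure_pmf.prob \<mu> (levels B L) = 1"
      using sum_pmf_eq_1[OF _ supp] measure_measure_pmf_finite[of "levels B L" \<mu>]
      unfolding levels_eq by simp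
    have "measure_pmf.prob \<mu> (levels B L) \<le>
        measure_pmf.prob \<mu> (lev {1..j-1} \<union> {inverse (B^j)}) + pT"
      unfolding lv pT_def by (rule measure_Un_le) auto
    also have "measure_pmf.prob \<mu> (lev {1..j-1} \<union> {inverse (B^j)}) \<le>
        measure_pmf.prob \<mu> (lev {1..j-1}) + pmf \<mu> (inverse (B^j))"
      using measure_Un_le[of "lev {1..j-1}" "measure_pmf \<mu>" "{inverse (B^j)}"]
      by (simp add: measure_pmf_single)
    finally have tot: "1 \<le> measure_pmf.prob \<mu> (lev {1..j-1}) + pmf \<mu> (inverse (B^j)) + pT"
      using one by simp
    have small: "measure_pmf.prob \<mu> (lev {1..j-1}) \<le> 1/2"
    proof (cases "j = 1")
      case True then show ?thesis unfolding lev_def by simp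
    next
      case False
      then have "measure_pmf.prob \<mu> {inverse (B ^ l) | l. l \<in> {1..j-1}} \<le> inverse (real n ^ 9)"
        using Dm L by simp
      moreover have "{inverse (B ^ l) | l. l \<in> {1..j-1}} = lev {1..j-1}" unfolding lev_def by auto
      moreover have "inverse (real n ^ 9) \<le> 1/2"
      proof -
        have n2: "real n \<ge> 2"
        proof (rule ccontr)
          assume "\<not> real n \<ge> 2"
          then have "real n \<le> 2" by simp
          moreover have "real n > 0" using Ln4' unfolding Ln_def by (cases n) auto
          ultimately have "ln (real n) \<le> ln 2" by simp
          moreover have "ln (2::real) < 1" using ln_2_less_1 by simp
          ultimately show False using Ln4' unfolding Ln_def by simp
        qed
        have "real n ^ 1 \<le> real n ^ 9" using n2 by (intro power_increasing) auto
        then have "2 \<le> real n ^ 9" using n2 by (metis power_one_right order_trans)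
        then have "inverse (real n ^ 9) \<le> inverse 2" by (rule le_imp_inverse_le) simp
        then show ?thesis by simp
      qed
      ultimately show ?thesis by simp
    qed
    have d1: "inverse (\<rho> ^ j) * \<eta> \<le> 1/2" unfolding \<eta>_def using \<rho>pos by simp
    have d2: "inverse (\<rho> ^ (j+1)) * \<eta> \<le> 1/2"
    proof (cases "j = 1")
      case True then show ?thesis unfolding \<eta>_def by simp
    next
      case False
      have "inverse (\<rho> ^ (j+1)) * \<eta> = 1/(2*\<rho>)" unfolding \<eta>_def using False \<rho>pos by (simp add: field_simps)
      then show ?thesis using \<rho>64 by simp
    qed
    have cj: "pmf \<mu> (inverse (B^j)) \<le> c * inverse (B ^ (2*j)) * (1 + inverse (\<rho> ^ j) * \<eta>)"
      using cb L by auto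
    have cj1: "c * inverse (B ^ (2*(j+1))) * (1 - inverse (\<rho> ^ (j+1)) * \<eta>) \<le> pmf \<mu> (inverse (B^(j+1)))"
      using cb[rule_format, of "j+1"] L by auto
    have bb: "inverse (B ^ (2*j)) = B^2 * inverse (B ^ (2*(j+1)))"
      using Bpos by (simp add: power_add field_simps power2_eq_square)
    have cpos: "c * inverse (B ^ (2*(j+1))) \<ge> 0" using c0 Bpos by simp
    have "pmf \<mu> (inverse (B^j)) \<le> c * inverse (B ^ (2*j)) * (3/2)"
    proof -
      have "c * inverse (B ^ (2*j)) * (1 + inverse (\<rho> ^ j) * \<eta>) \<le> c * inverse (B ^ (2*j)) * (3/2)"
        using d1 c0 Bpos by (intro mult_left_mono) auto
      then show ?thesis using cj by linarith
    qed
    also have "\<dots> = 3 * B^2 * (c * inverse (B ^ (2*(j+1))) * (1/2))" unfolding bb by simp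
    also have "\<dots> \<le> 3 * B^2 * pmf \<mu> (inverse (B^(j+1)))"
    proof (rule mult_left_mono)
      have "c * inverse (B ^ (2*(j+1))) * (1/2) \<le> c * inverse (B ^ (2*(j+1))) * (1 - inverse (\<rho> ^ (j+1)) * \<eta>)"
        using cpos d2 by (intro mult_left_mono) auto
      then show "c * inverse (B ^ (2*(j+1))) * (1/2) \<le> pmf \<mu> (inverse (B^(j+1)))" using cj1 by simp
    qed simp
    also have "pmf \<mu> (inverse (B^(j+1))) \<le> pT"
    proof -
      have "inverse (B^(j+1)) \<in> lev {j+1..L}" unfolding lev_def using jL
        by (intro image_eqI[where x="j+1"]) auto
      then have "{inverse (B^(j+1))} \<subseteq> lev {j+1..L}" by simp
      then have "measure_pmf.prob \<mu> {inverse (B^(j+1))} \<le> pT"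
        unfolding pT_def by (rule measure_pmf.finite_measure_mono) auto
      then show ?thesis by (simp add: measure_pmf_single)
    qed
    then have "3 * B^2 * pmf \<mu> (inverse (B^(j+1))) \<le> 3 * B^2 * pT" by (intro mult_left_mono) auto
    finally have xj: "pmf \<mu> (inverse (B^j)) \<le> 3 * B^2 * pT" .
    have B21: "B^2 \<ge> 1" using B0 by (simp add: one_le_power)
    have pT0: "pT \<ge> 0" unfolding pT_def by simp
    have "pT \<le> B^2 * pT" using B21 pT0 by (simp add: mult_le_cancel_right1)
    then show ?thesis using tot small xj by linarith
  qed
  have Q16: "Q \<le> 16 * B^2"
  proof -
    have "Q = Q * 1" by simp
    also have "\<dots> \<le> Q * (8 * B^2 * pT)" using pT8 Q0 by (intro mult_left_mono) auto
    also have "\<dots> = 8 * B^2 * (Q * pT)" by simp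
    also have "\<dots> \<le> 8 * B^2 * 2" using QpT by (intro mult_left_mono) auto
    finally show ?thesis by simp
  qed
  have part2: "measure_pmf.prob \<nu> (lev {1..j}) \<le> inverse (real n ^ 9)"
  proof -
    have "measure_pmf.prob \<nu> (lev {1..j}) \<le> 16 * B^2 * exp (- B)"
    proof -
      have "Q * exp (- B) \<le> 16 * B^2 * exp (- B)" using Q16 by (intro mult_right_mono) auto
      then show ?thesis using Sb by linarith
    qed
    also have "\<dots> \<le> exp (- 9 * Ln)"
      using asym[of B Ln] B0 BLn Ln4' by simp
    also have "exp (- 9 * Ln) = inverse (real n ^ 9)"
    proof -
      have n0: "real n > 0" using Ln4' unfolding Ln_def by (cases n) auto
      have "exp (real 9 * Ln) = exp Ln ^ 9" by (rule exp_of_nat_mult)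
      also have "exp Ln = real n" unfolding Ln_def using n0 by simp
      finally have e9: "exp (9 * Ln) = real n ^ 9" by simp
      have "exp (- 9 * Ln) = inverse (exp (9 * Ln))" by (simp add: exp_minus[symmetric])
      then show ?thesis using e9 by simp
    qed
    finally show ?thesis .
  qed
  have part1: "set_pmf \<nu> \<subseteq> levels B L"
  proof
    fix x assume "x \<in> set_pmf \<nu>"
    then have "pmf \<nu> x \<noteq> 0" by (simp add: set_pmf_iff)
    then have "pmf \<mu> x \<noteq> 0" using pform[of x] by auto
    then show "x \<in> levels B L" using supp by (auto simp: set_pmf_iff)
  qed
  have "Dclass n B \<rho> L (j+1) (\<rho> ^ (j+1) / 2) \<nu>"
    unfolding Dclass_def
  proof (intro conjI impI)
    show "set_pmf \<nu> \<subseteq> levels B L" by (rule part1)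
    have "{inverse (B ^ l) | l. l \<in> {1..j+1-1}} = lev {1..j}" unfolding lev_def by auto
    then show "measure_pmf.prob \<nu> {inverse (B ^ l) | l. l \<in> {1..j+1-1}} \<le> inverse (real n ^ 9)"
      using part2 by simp
    show "\<exists>c>0. \<forall>l\<in>{j + 1..L}.
          c * inverse (B ^ (2 * l)) * (1 - inverse (\<rho> ^ l) * (\<rho> ^ (j + 1) / 2)) \<le> pmf \<nu> (inverse (B ^ l)) \<and>
          pmf \<nu> (inverse (B ^ l)) \<le> c * inverse (B ^ (2 * l)) * (1 + inverse (\<rho> ^ l) * (\<rho> ^ (j + 1) / 2))"
      using part3 Q0 c0 by (intro exI[of _ "Q*c"]) auto
  qed
  then show ?thesis unfolding Dcls_def \<nu>_def m_def using L by simp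
qed

theorem mainTheorem2:
  shows "\<exists>N::nat. \<forall>n\<ge>N. \<forall>\<alpha>::real. 1 \<le> \<alpha> \<and> \<alpha> \<le> real n powr 0.2 \<longrightarrow>
    (\<forall>B \<gamma> \<rho>. B = \<alpha> * (ln (real n)) ^ 10 \<and> \<gamma> = B \<and> \<rho> = (ln (real n)) ^ 3 \<longrightarrow>
    (\<forall>(L::nat) (j::nat) (\<mu>::real pmf) (\<theta>::nat \<Rightarrow> bool).
       2 \<le> L \<and> 1 \<le> j \<and> j \<le> L - 1 \<and> Dcls n B \<rho> L j \<mu> \<and>
       (\<forall>i\<ge>numPulls \<gamma> B j. \<not> \<theta> i) \<and>
       zeta1 n \<gamma> B j \<le> real (card {i. i < numPulls \<gamma> B j \<and> \<theta> i}) \<and>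
       real (card {i. i < numPulls \<gamma> B j \<and> \<theta> i}) \<le> zeta3 \<gamma> B j
       \<longrightarrow> Dcls n B \<rho> L (j+1) (posterior \<mu> (numPulls \<gamma> B j) \<theta>)))"
proof (intro exI[of _ "nat \<lceil>exp (4::real)\<rceil>"] allI impI)
  fix n :: nat and \<alpha> B \<gamma> \<rho> :: real and L j :: nat and \<mu> :: "real pmf" and \<theta> :: "nat \<Rightarrow> bool"
  assume n: "nat \<lceil>exp (4::real)\<rceil> \<le> n" and a: "1 \<le> \<alpha> \<and> \<alpha> \<le> real n powr 0.2"
    and B: "B = \<alpha> * (ln (real n)) ^ 10 \<and> \<gamma> = B \<and> \<rho> = (ln (real n)) ^ 3"
    and H: "2 \<le> L \<and> 1 \<le> j \<and> j \<le> L - 1 \<and> Dcls n B \<rho> L j \<mu> \<and>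
       (\<forall>i\<ge>numPulls \<gamma> B j. \<not> \<theta> i) \<and>
       zeta1 n \<gamma> B j \<le> real (card {i. i < numPulls \<gamma> B j \<and> \<theta> i}) \<and>
       real (card {i. i < numPulls \<gamma> B j \<and> \<theta> i}) \<le> zeta3 \<gamma> B j"
  have "exp 4 \<le> real n"
  proof -
    have "exp 4 \<le> real_of_int \<lceil>exp (4::real)\<rceil>" by (rule le_of_int_ceiling)
    also have "\<dots> = real (nat \<lceil>exp (4::real)\<rceil>)" by (simp add: exp_ge_zero)
    also have "\<dots> \<le> real n" using n by (simp only: of_nat_le_iff)
    finally show ?thesis .
  qed
  then have Ln4: "ln (real n) \<ge> 4"
    by (metis exp_gt_zero exp_le_cancel_iff exp_ln less_le_trans)
  have "ln (real n) ^ 10 \<ge> 0" using Ln4 by simp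
  then have Bge: "B \<ge> ln (real n) ^ 10" using a B by (simp add: mult_le_cancel_right1)
  show "Dcls n B \<rho> L (j+1) (posterior \<mu> (numPulls \<gamma> B j) \<theta>)"
    using core[OF Ln4 Bge _ _ _ _ _ _ _ _, of \<rho> L j \<mu> \<theta>] B H by auto
qed


end
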